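(* There exists a finite set $B$ of closed, bounded line segments in $\mathbb{R}^2$ (one may take three segments) such that $R(B)=\{p\in\mathbb{R}^2: \text{every line through } p \text{ intersects } B\}$ has a maximal region consisting of a single point $p$ that does not lie on any segment of $B$.
   Context: A region is a bounded, closed, connected subset of $\mathbb{R}^2$. For a set $P\subseteq\mathbb{R}^2$, a maximal region of $P$ is a region $R$ such that for every point $p\in R$ there is an open ball $A$ centered at $p$ with $A\cap R = A\cap P$. A line intersects $B$ if it meets at least one segment of $B$. *)

theory Defs
  imports "HOL-Analysis.Analysis"
begin

definition is_segment :: "(real^2) set \<Rightarrow> bool" where
  "is_segment S \<longleftrightarrow> (\<exists>a b. a \<noteq> b \<and> S = closed_segment a b)"

definition is_line :: "(real^2) set \<Rightarrow> bool" where
  "is_line L \<longleftrightarrow> (\<exists>q v. v \<noteq> 0 \<and> L = {q + t *\<^sub>R v | t. True})"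

definition line_meets :: "(real^2) set \<Rightarrow> (real^2) set set \<Rightarrow> bool" where
  "line_meets L B \<longleftrightarrow> (\<exists>S\<in>B. L \<inter> S \<noteq> {})"

definition RB :: "(real^2) set set \<Rightarrow> (real^2) set" where
  "RB B = {p. \<forall>L. is_line L \<and> p \<in> L \<longrightarrow> line_meets L B}"

definition is_region :: "(real^2) set \<Rightarrow> bool" where
  "is_region R \<longleftrightarrow> bounded R \<and> closed R \<and> connected R"

definition maximal_region :: "(real^2) set \<Rightarrow> (real^2) set \<Rightarrow> bool" where
  "maximal_region P R \<longleftrightarrow> is_region R \<and>
     (\<forall>p\<in>R. \<exists>e>0. ball p e \<inter> R = ball p e \<inter> P)"

end

theory Submission
  imports Defs
begin

lemma vec2_eq: "(x::real^2) = y \<longleftrightarrow> x$1 = y$1 \<and> x$2 = y$2"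
  by (simp add: vec_eq_iff forall_2)

lemma seg_comp:
  assumes "z \<in> closed_segment (vector[a1,a2]) (vector[b1,b2] :: real^2)"
  obtains u where "0 \<le> u" "u \<le> 1" "z$1 = (1-u)*a1 + u*b1" "z$2 = (1-u)*a2 + u*b2"
  using assms unfolding closed_segment_def by auto

lemma seg_in:
  assumes "0 \<le> u" "u \<le> 1" "z$1 = (1-u)*a1 + u*b1" "z$2 = (1-u)*a2 + u*b2"
  shows "z \<in> closed_segment (vector[a1,a2]) (vector[b1,b2] :: real^2)"
  unfolding closed_segment_def using assms
  by (auto simp: vec2_eq intro!: exI[of _ u])

definition S1 :: "(real^2) set" where "S1 = closed_segment (vector[1,0]) (vector[1,1])"
definition S2 :: "(real^2) set" where "S2 = closed_segment (vector[-1,-1]) (vector[0,-1])"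
definition S3 :: "(real^2) set" where "S3 = closed_segment (vector[0,1]) (vector[-1,0])"

lemma zero_in_RB: "(0::real^2) \<in> RB {S1,S2,S3}"
  unfolding RB_def
proof (intro CollectI allI impI)
  fix L assume "is_line L \<and> (0::real^2) \<in> L"
  then obtain q v where v: "v \<noteq> 0" and L: "L = {q + t *\<^sub>R v | t. True}" and z: "0 \<in> L"
    unfolding is_line_def by blast
  from z L obtain t0 where t0: "0 = q + t0 *\<^sub>R v" by auto
  have inL: "s *\<^sub>R v \<in> L" for s
  proof -
    have "s *\<^sub>R v = q + (s + t0) *\<^sub>R v" using t0 by (simp add: algebra_simps)
    thus ?thesis using L by blast
  qed
  define a where "a = v$1"
  define b where "b = v$2"
  have ab: "a \<noteq> 0 \<or> b \<noteq> 0" using v by (auto simp: vec2_eq a_def b_def)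
  show "line_meets L {S1,S2,S3}"
    unfolding line_meets_def
  proof (cases "a*b \<ge> 0")
    case True
    show "\<exists>S\<in>{S1,S2,S3}. L \<inter> S \<noteq> {}"
    proof (cases "\<bar>b\<bar> \<le> \<bar>a\<bar>")
      case True
      with ab have "a \<noteq> 0" by auto
      have "0 \<le> b/a" using \<open>a*b\<ge>0\<close> \<open>a\<noteq>0\<close>
        by (metis zero_le_divide_iff zero_le_mult_iff)
      moreover have "b/a \<le> 1" using True \<open>a\<noteq>0\<close>
        by (metis abs_divide abs_le_D1 divide_le_eq_1 zero_less_abs_iff)
      ultimately have "(1/a) *\<^sub>R v \<in> S1" unfolding S1_def
        by (intro seg_in[of "b/a"]) (auto simp: a_def[symmetric] b_def[symmetric] \<open>a\<noteq>0\<close>)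
      thus ?thesis using inL by blast
    next
      case False
      hence "b \<noteq> 0" by auto
      have "0 \<le> a/b" using \<open>a*b\<ge>0\<close> \<open>b\<noteq>0\<close>
        by (metis zero_le_divide_iff zero_le_mult_iff)
      moreover have "a/b \<le> 1" using False \<open>b\<noteq>0\<close>
        by (metis abs_divide abs_le_D1 divide_le_eq_1 less_le_not_le linorder_linear zero_less_abs_iff)
      ultimately have "(-1/b) *\<^sub>R v \<in> S2" unfolding S2_def
        by (intro seg_in[of "1 - a/b"]) (auto simp: a_def[symmetric] b_def[symmetric] \<open>b\<noteq>0\<close> algebra_simps)
      thus ?thesis using inL by blast
    qed
  next
    case False
    hence ne: "b - a \<noteq> 0" by auto
    have "0 \<le> -a/(b-a)" "-a/(b-a) \<le> 1"
    proof -
      have "a < 0 \<and> b > 0 \<or> a > 0 \<and> b < 0" using False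
        by (smt (verit) mult_nonneg_nonneg mult_nonpos_nonpos)
      thus "0 \<le> -a/(b-a)" "-a/(b-a) \<le> 1" by (auto simp: divide_simps)
    qed
    hence "(1/(b-a)) *\<^sub>R v \<in> S3" unfolding S3_def
      by (intro seg_in[of "-a/(b-a)"]) (use ne in \<open>auto simp: a_def[symmetric] b_def[symmetric] divide_simps\<close>)
    thus "\<exists>S\<in>{S1,S2,S3}. L \<inter> S \<noteq> {}" using inL by blast
  qed
qed

lemma not_in_RB:
  assumes q: "q \<in> ball (0::real^2) (1/2)" and nz: "q \<noteq> 0"
  shows "q \<notin> RB {S1,S2,S3}"
proof -
  have n: "norm q < 1/2" using q by simp
  have c1: "\<bar>q$1\<bar> < 1/2" "\<bar>q$2\<bar> < 1/2"
    using component_le_norm_cart[of q 1] component_le_norm_cart[of q 2] n by linarith+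
  have miss: "\<not> line_meets {q + t *\<^sub>R v | t. True} {S1,S2,S3}"
    if v: "v \<noteq> 0" and f: "\<And>z t. z = q + t *\<^sub>R v \<Longrightarrow> z \<in> S1 \<union> S2 \<union> S3 \<Longrightarrow> False" for v
    unfolding line_meets_def using f by blast
  have line: "is_line {q + t *\<^sub>R v | t. True} \<and> q \<in> {q + t *\<^sub>R v | t. True}" if "v \<noteq> 0" for v
    proof -
      have "q \<in> {q + t *\<^sub>R v | t. True}" by (auto intro!: exI[of _ 0])
      thus ?thesis using that unfolding is_line_def by blast
    qed
  have "\<exists>v. v \<noteq> 0 \<and> \<not> line_meets {q + t *\<^sub>R v | t. True} {S1,S2,S3}"
  proof -
    consider "q$2 < 0" | "q$1 > 0" | "q$2 > q$1"
      using nz by (fastforce simp: vec2_eq)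
    thus ?thesis
    proof cases
      case 1
      have "vector[1,0] \<noteq> (0::real^2)" by (simp add: vec2_eq)
      moreover have "\<not> line_meets {q + t *\<^sub>R vector[1,0] | t. True} {S1,S2,S3}"
      proof (rule miss)
        fix z t assume z: "z = q + t *\<^sub>R (vector[1,0]::real^2)" "z \<in> S1 \<union> S2 \<union> S3"
        have "z$2 = q$2" using z(1) by simp
        with z(2) 1 c1 show False unfolding S1_def S2_def S3_def
          by (auto elim!: seg_comp)
      qed (simp add: vec2_eq)
      ultimately show ?thesis by blast
    next
      case 2
      have "vector[0,1] \<noteq> (0::real^2)" by (simp add: vec2_eq)
      moreover have "\<not> line_meets {q + t *\<^sub>R vector[0,1] | t. True} {S1,S2,S3}"
      proof (rule miss)
        fix z t assume z: "z = q + t *\<^sub>R (vector[0,1]::real^2)" "z \<in> S1 \<union> S2 \<union> S3"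
        have "z$1 = q$1" using z(1) by simp
        with z(2) 2 c1 show False unfolding S1_def S2_def S3_def
          by (auto elim!: seg_comp)
      qed (simp add: vec2_eq)
      ultimately show ?thesis by blast
    next
      case 3
      have "vector[1,1] \<noteq> (0::real^2)" by (simp add: vec2_eq)
      moreover have "\<not> line_meets {q + t *\<^sub>R vector[1,1] | t. True} {S1,S2,S3}"
      proof (rule miss)
        fix z t assume z: "z = q + t *\<^sub>R (vector[1,1]::real^2)" "z \<in> S1 \<union> S2 \<union> S3"
        have "z$2 - z$1 = q$2 - q$1" using z(1) by simp
        with z(2) 3 c1 show False unfolding S1_def S2_def S3_def
          by (auto elim!: seg_comp)
      qed (simp add: vec2_eq)
      ultimately show ?thesis by blast
    qed
  qed
  then obtain v where "v \<noteq> 0" "\<not> line_meets {q + t *\<^sub>R v | t. True} {S1,S2,S3}" by blast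
  with line[OF this(1)] show ?thesis unfolding RB_def by blast
qed

theorem lemma2:
  shows "\<exists>B :: (real^2) set set. finite B \<and> card B = 3 \<and> (\<forall>S\<in>B. is_segment S) \<and>
           (\<exists>p. maximal_region (RB B) {p} \<and> (\<forall>S\<in>B. p \<notin> S))"
proof (intro exI conjI)
  show "finite {S1,S2,S3}" by simp
  have d: "S1 \<noteq> S2" "S1 \<noteq> S3" "S2 \<noteq> S3" unfolding S1_def S2_def S3_def
    by (auto simp: vec2_eq doubleton_eq_iff)
  thus "card {S1,S2,S3} = 3" by simp
  show "\<forall>S\<in>{S1,S2,S3}. is_segment S" unfolding is_segment_def S1_def S2_def S3_def
    by (metis (no_types, lifting) insert_iff empty_iff vector_2 zero_neq_one one_neq_zero neg_0_equal_iff_equal)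
  show "\<forall>S\<in>{S1,S2,S3}. (0::real^2) \<notin> S" unfolding S1_def S2_def S3_def
    by (auto elim!: seg_comp)
  show "maximal_region (RB {S1,S2,S3}) {0}"
    unfolding maximal_region_def is_region_def
  proof (intro conjI ballI)
    fix p assume "p \<in> {0::real^2}"
    hence p: "p = 0" by simp
    have "ball 0 (1/2) \<inter> {0} = ball 0 (1/2) \<inter> RB {S1,S2,S3}"
      using zero_in_RB not_in_RB by blast
    thus "\<exists>e>0. ball p e \<inter> {0} = ball p e \<inter> RB {S1,S2,S3}" using p
      by (intro exI[of _ "1/2"]) auto
  qed auto
qed

end
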